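(* Let $K_1,K_2$ be two $q$-edge-colored ordered complete graphs, and let $S\subseteq[q]$ be an arbitrary set of colors. Let $L_1,L_2$ be the lengths of the longest monotone $S$-colored paths in $K_1,K_2$ respectively. Then the length of the longest $S$-colored monotone path in $K_1\otimes K_2$ is exactly $L_1L_2$.
   Context: An ordered complete graph is a complete graph with a linear order on its vertices; colors are from $[q]$. A path $v_1,\dots,v_L$ is monotone if $v_1<\dots<v_L$; its length is its number of vertices; it is $S$-colored if every edge of it has a color in $S$. The lexicographic product $K_1\otimes K_2$ is the $q$-edge-colored ordered complete graph on vertex set $V(K_2)\times V(K_1)$, ordered lexicographically with the $K_2$-coordinate compared first, where the edge between $(u,x)$ and $(w,y)$ receives the color of $uw$ in $K_2$ if $u\neq w$, and the color of $xy$ in $K_1$ if $u=w$. *)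

theory Defs
  imports Main "HOL-Library.Product_Lexorder"
begin

definition colored_ocg :: "'a::linorder set \<Rightarrow> ('a \<Rightarrow> 'a \<Rightarrow> nat) \<Rightarrow> nat \<Rightarrow> bool" where
  "colored_ocg V c q \<longleftrightarrow> finite V \<and>
     (\<forall>x\<in>V. \<forall>y\<in>V. x \<noteq> y \<longrightarrow> c x y = c y x \<and> c x y \<in> {1..q})"

text \<open>Monotone path v_1 < ... < v_L in V (list of its vertices; length = number of vertices).\<close>
definition mono_path :: "'a::linorder set \<Rightarrow> 'a list \<Rightarrow> bool" where
  "mono_path V vs \<longleftrightarrow> sorted_wrt (<) vs \<and> set vs \<subseteq> V"

definition S_colored :: "('a \<Rightarrow> 'a \<Rightarrow> nat) \<Rightarrow> nat set \<Rightarrow> 'a list \<Rightarrow> bool" where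
  "S_colored c S vs \<longleftrightarrow> (\<forall>i. Suc i < length vs \<longrightarrow> c (vs ! i) (vs ! Suc i) \<in> S)"

definition longest_mono_path :: "'a::linorder set \<Rightarrow> ('a \<Rightarrow> 'a \<Rightarrow> nat) \<Rightarrow> nat set \<Rightarrow> nat" where
  "longest_mono_path V c S = Max {length vs | vs. mono_path V vs \<and> S_colored c S vs}"

text \<open>Lexicographic product K1 \<otimes> K2 on V2 \<times> V1 (pairs ordered lexicographically,
  K2-coordinate first, via Product_Lexorder).\<close>
definition lex_prod_color :: "('a \<Rightarrow> 'a \<Rightarrow> nat) \<Rightarrow> ('b \<Rightarrow> 'b \<Rightarrow> nat) \<Rightarrow> ('b \<times> 'a) \<Rightarrow> ('b \<times> 'a) \<Rightarrow> nat" where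
  "lex_prod_color c1 c2 p p' = (if fst p \<noteq> fst p' then c2 (fst p) (fst p') else c1 (snd p) (snd p'))"

end

theory Submission
  imports Defs
begin

lemma S_col_succ: "S_colored c S vs \<longleftrightarrow> successively (\<lambda>x y. c x y \<in> S) vs"
  unfolding S_colored_def successively_conv_nth by simp

lemma mp_len:
  assumes "finite V" "mono_path V vs"
  shows "length vs \<le> card V"
proof -
  have "distinct vs" using assms(2) unfolding mono_path_def
    by (metis less_irrefl sorted_wrt_iff_nth_less distinct_conv_nth linorder_neq_iff)
  hence "length vs = card (set vs)" by (simp add: distinct_card)
  also have "\<dots> \<le> card V" using assms unfolding mono_path_def by (simp add: card_mono)
  finally show ?thesis .
qed

lemma lmp_fin:
  assumes "finite V"
  shows "finite {length vs | vs. mono_path V vs \<and> S_colored c S vs}"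
proof (rule finite_subset[of _ "{..card V}"])
  show "{length vs | vs. mono_path V vs \<and> S_colored c S vs} \<subseteq> {..card V}"
    using mp_len[OF assms] by auto
qed simp

lemma lmp_ge:
  assumes "finite V" "mono_path V vs" "S_colored c S vs"
  shows "length vs \<le> longest_mono_path V c S"
  unfolding longest_mono_path_def using lmp_fin[OF assms(1)] assms(2,3)
  by (intro Max_ge) auto

lemma lmp_ex:
  assumes "finite V"
  shows "\<exists>vs. mono_path V vs \<and> S_colored c S vs \<and> length vs = longest_mono_path V c S"
proof -
  have ne: "{length vs | vs. mono_path V vs \<and> S_colored c S vs} \<noteq> {}"
  proof -
    have "length ([]::'a list) \<in> {length vs | vs. mono_path V vs \<and> S_colored c S vs}"
      by (auto simp: mono_path_def S_colored_def)
    thus ?thesis by blast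
  qed
  from Max_in[OF lmp_fin[OF assms] ne] show ?thesis
    unfolding longest_mono_path_def by auto
qed

definition prodp :: "'b list \<Rightarrow> 'a list \<Rightarrow> ('b \<times> 'a) list" where
  "prodp ys xs = concat (map (\<lambda>v. map (Pair v) xs) ys)"

lemma prodp_Cons: "prodp (y # ys) xs = map (Pair y) xs @ prodp ys xs"
  by (simp add: prodp_def)

lemma prodp_len: "length (prodp ys xs) = length ys * length xs"
  by (induction ys) (auto simp: prodp_def)

lemma prodp_set: "set (prodp ys xs) = set ys \<times> set xs"
  by (auto simp: prodp_def)

lemma prodp_hd: "ys \<noteq> [] \<Longrightarrow> xs \<noteq> [] \<Longrightarrow> hd (prodp ys xs) = (hd ys, hd xs)"
  by (cases ys; cases xs) (auto simp: prodp_def)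

lemma prodp_sorted:
  fixes ys :: "'b::linorder list" and xs :: "'a::linorder list"
  assumes "sorted_wrt (<) ys" "sorted_wrt (<) xs"
  shows "sorted_wrt (<) (prodp ys xs)"
  using assms(1)
proof (induction ys)
  case Nil then show ?case by (simp add: prodp_def)
next
  case (Cons y ys)
  show ?case unfolding prodp_Cons sorted_wrt_append
    using Cons assms(2) by (auto simp: sorted_wrt_map prodp_set)
qed

lemma prodp_col:
  fixes ys :: "'b::linorder list"
  assumes "successively (\<lambda>x y. c2 x y \<in> S) ys" "successively (\<lambda>x y. c1 x y \<in> S) xs"
    "xs \<noteq> []" "sorted_wrt (<) ys"
  shows "successively (\<lambda>x y. lex_prod_color c1 c2 x y \<in> S) (prodp ys xs)"
  using assms(1,4)
proof (induction ys)
  case Nil then show ?case by (simp add: prodp_def)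
next
  case (Cons y ys)
  have IH: "successively (\<lambda>x y. lex_prod_color c1 c2 x y \<in> S) (prodp ys xs)"
    using Cons.prems by (intro Cons.IH) (auto simp: successively_Cons)
  have m: "successively (\<lambda>x y. lex_prod_color c1 c2 x y \<in> S) (map (Pair y) xs)"
    using assms(2) by (simp add: successively_map lex_prod_color_def)
  show ?case
  proof (cases ys)
    case Nil then show ?thesis using m by (simp add: prodp_def)
  next
    case (Cons z zs)
    have "c2 y z \<in> S" using Cons.prems Cons by simp
    moreover have "y \<noteq> z" using Cons.prems Cons by (auto simp del: less_prod_simp)
    moreover have "last (map (Pair y) xs) = (y, last xs)" using assms(3) by (simp add: last_map)
    moreover have "hd (prodp ys xs) = (z, hd xs)" using assms(3) Cons by (simp add: prodp_hd)
    moreover have "prodp ys xs \<noteq> []" using assms(3) Cons by (simp add: prodp_def)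
    ultimately show ?thesis using m IH
      unfolding prodp_Cons successively_append_iff by (simp add: lex_prod_color_def)
  qed
qed

lemma block_bound:
  fixes V1 :: "'a::linorder set" and V2 :: "'b::linorder set"
  assumes fin1: "finite V1"
  shows "mono_path (V2 \<times> V1) ps \<Longrightarrow> S_colored (lex_prod_color c1 c2) S ps \<Longrightarrow> ps \<noteq> [] \<Longrightarrow>
    \<exists>us. mono_path V2 us \<and> S_colored c2 S us \<and> us \<noteq> [] \<and> hd us = fst (hd ps) \<and>
       length ps \<le> length us * longest_mono_path V1 c1 S"
proof (induction "length ps" arbitrary: ps rule: less_induct)
  case less
  define u where "u = fst (hd ps)"
  define B where "B = takeWhile (\<lambda>p. fst p = u) ps"
  define A where "A = dropWhile (\<lambda>p. fst p = u) ps"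
  have ps: "ps = B @ A" unfolding A_def B_def by simp
  have Bne: "B \<noteq> []" using less.prems(3) unfolding B_def u_def by (cases ps) auto
  have Bfst: "\<forall>p\<in>set B. fst p = u" unfolding B_def by (auto dest: set_takeWhileD)
  have srt: "sorted_wrt (<) B" "sorted_wrt (<) A" "\<forall>x\<in>set B. \<forall>y\<in>set A. x < y"
    using less.prems(1) ps unfolding mono_path_def by (metis sorted_wrt_append)+
  have suc: "successively (\<lambda>x y. lex_prod_color c1 c2 x y \<in> S) B"
     "successively (\<lambda>x y. lex_prod_color c1 c2 x y \<in> S) A"
     "A = [] \<or> lex_prod_color c1 c2 (last B) (hd A) \<in> S"
    using less.prems(2) Bne ps unfolding S_col_succ by (metis successively_append_iff)+
  have setps: "set ps \<subseteq> V2 \<times> V1" using less.prems(1) unfolding mono_path_def by simp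
  have uV: "u \<in> V2" using setps less.prems(3) unfolding u_def by (cases ps) auto
  have bl: "length B \<le> longest_mono_path V1 c1 S"
  proof -
    have "sorted_wrt (<) (map snd B)" unfolding sorted_wrt_map
      using srt(1) Bfst by (rule_tac sorted_wrt_mono_rel[of _ "(<)"]) (auto simp: less_prod_def')
    moreover have "set (map snd B) \<subseteq> V1" using setps ps by auto
    moreover have "S_colored c1 S (map snd B)" unfolding S_col_succ successively_map
      using suc(1) Bfst by (rule_tac successively_mono) (auto simp: lex_prod_color_def)
    ultimately show ?thesis using lmp_ge[OF fin1, of "map snd B" c1 S] by (simp add: mono_path_def)
  qed
  show ?case
  proof (cases "A = []")
    case True
    then show ?thesis using bl uV ps
      by (intro exI[of _ "[u]"]) (simp add: mono_path_def S_colored_def u_def)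
  next
    case False
    have f1: "length A < length ps" using ps Bne by simp
    have f2: "mono_path (V2 \<times> V1) A" using srt setps ps unfolding mono_path_def by auto
    have f3: "S_colored (lex_prod_color c1 c2) S A" using suc unfolding S_col_succ by simp
    obtain us' where us': "mono_path V2 us'" "S_colored c2 S us'" "us' \<noteq> []"
       "hd us' = fst (hd A)" "length A \<le> length us' * longest_mono_path V1 c1 S"
      using less.hyps[OF f1 f2 f3 False] by blast
    define w where "w = fst (hd A)"
    have wu: "w \<noteq> u" using hd_dropWhile[of "\<lambda>p. fst p = u" ps] False by (simp add: A_def w_def)
    have "last B < hd A" using srt(3) Bne False by simp
    moreover have "fst (last B) = u" using Bfst Bne by simp
    ultimately have uw: "u < w" using wu unfolding w_def by (auto simp: less_prod_def')
    have cuw: "c2 u w \<in> S" using suc(3) False wu \<open>fst (last B) = u\<close>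
      unfolding w_def lex_prod_color_def by auto
    obtain rest where usr: "us' = w # rest" using us'(3,4) unfolding w_def by (cases us') auto
    have "mono_path V2 (u # us')" using us'(1) uV uw usr unfolding mono_path_def by auto
    moreover have "S_colored c2 S (u # us')" using us'(2) cuw usr unfolding S_col_succ by simp
    moreover have "length ps \<le> length (u # us') * longest_mono_path V1 c1 S"
      using ps bl us'(5) by simp
    ultimately show ?thesis using u_def by (intro exI[of _ "u # us'"]) simp
  qed
qed

theorem proposition3p3:
  fixes V1 :: "'a::linorder set" and V2 :: "'b::linorder set"
    and c1 :: "'a \<Rightarrow> 'a \<Rightarrow> nat" and c2 :: "'b \<Rightarrow> 'b \<Rightarrow> nat"
    and q :: nat and S :: "nat set"
  assumes "colored_ocg V1 c1 q" and "colored_ocg V2 c2 q"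
    and "S \<subseteq> {1..q}"
  shows "longest_mono_path (V2 \<times> V1) (lex_prod_color c1 c2) S
           = longest_mono_path V1 c1 S * longest_mono_path V2 c2 S"
proof -
  have fin1: "finite V1" and fin2: "finite V2" using assms(1,2) unfolding colored_ocg_def by auto
  have fin: "finite (V2 \<times> V1)" using fin1 fin2 by simp
  obtain xs where xs: "mono_path V1 xs" "S_colored c1 S xs" "length xs = longest_mono_path V1 c1 S"
    using lmp_ex[OF fin1] by blast
  obtain ys where ys: "mono_path V2 ys" "S_colored c2 S ys" "length ys = longest_mono_path V2 c2 S"
    using lmp_ex[OF fin2] by blast
  obtain ps where ps: "mono_path (V2 \<times> V1) ps" "S_colored (lex_prod_color c1 c2) S ps"
     "length ps = longest_mono_path (V2 \<times> V1) (lex_prod_color c1 c2) S"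
    using lmp_ex[OF fin] by blast
  have ge: "longest_mono_path V1 c1 S * longest_mono_path V2 c2 S
      \<le> longest_mono_path (V2 \<times> V1) (lex_prod_color c1 c2) S"
  proof (cases "xs = []")
    case True then show ?thesis using xs by simp
  next
    case False
    have "mono_path (V2 \<times> V1) (prodp ys xs)"
      using xs(1) ys(1) prodp_sorted prodp_set unfolding mono_path_def by fastforce
    moreover have "S_colored (lex_prod_color c1 c2) S (prodp ys xs)"
      using prodp_col[of c2 S ys c1 xs] xs ys False unfolding S_col_succ mono_path_def by simp
    ultimately have "length (prodp ys xs) \<le> longest_mono_path (V2 \<times> V1) (lex_prod_color c1 c2) S"
      using lmp_ge[OF fin] by blast
    then show ?thesis using xs(3) ys(3) by (simp add: prodp_len mult.commute)
  qed
  have le: "length ps \<le> longest_mono_path V1 c1 S * longest_mono_path V2 c2 S"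
  proof (cases "ps = []")
    case True then show ?thesis by simp
  next
    case False
    then obtain us where us: "mono_path V2 us" "S_colored c2 S us"
       "length ps \<le> length us * longest_mono_path V1 c1 S"
      using block_bound[OF fin1 ps(1) ps(2)] by blast
    have "length us \<le> longest_mono_path V2 c2 S" using lmp_ge[OF fin2 us(1,2)] .
    then have "length us * longest_mono_path V1 c1 S \<le> longest_mono_path V2 c2 S * longest_mono_path V1 c1 S"
      by (rule mult_right_mono) simp
    then show ?thesis using us(3) by (metis mult.commute order_trans)
  qed
  show ?thesis using ge le ps(3) by simp
qed

end
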